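(* Let $(A,\mathcal H)$ be a commutative Hopf algebroid and $I\subseteq\mathcal H$ a Hopf ideal. Then $I$ is normal if and only if $\langle s-t\rangle\subseteq I$ and $\mathcal H/I\cong\overline{\mathcal H}/\bar I$ is a quotient right $\mathcal H$-comodule of $\overline{\mathcal H}$ with respect to the coaction $\delta:\overline{\mathcal H}\to\overline{\mathcal H}\otimes_A\mathcal H$, $\bar h\mapsto\sum\overline{h_2}\otimes_A\mathcal S(h_1)h_3$, i.e. there is a map $\tilde\delta:\overline{\mathcal H}/\bar I\to(\overline{\mathcal H}/\bar I)\otimes_A\mathcal H$ with $\tilde\delta\circ p=(p\otimes_A\mathcal H)\circ\delta$, where $p:\overline{\mathcal H}\to\overline{\mathcal H}/\bar I$ is the projection.
   Context: A commutative Hopf algebroid $(A,\mathcal H)$ over a field $\Bbbk$: commutative $\Bbbk$-algebras $A,\mathcal H$ with algebra maps $s,t:A\to\mathcal H$, $\varepsilon:\mathcal H\to A$, $\Delta:\mathcal H\to\mathcal H\otimes_A\mathcal H$ (left factor an $A$-module via $t$, right via $s$), $\mathcal S:\mathcal H\to\mathcal H$ such that $(\mathcal H,\Delta,\varepsilon)$ is a coassociative counital $A$-coring, $\mathcal Ss=t$, $\mathcal St=s$, $\mathcal S^2=\mathrm{id}$, $\sum\mathcal S(u_1)u_2=t\varepsilon(u)$, $\sum u_1\mathcal S(u_2)=s\varepsilon(u)$ ($\Delta(u)=\sum u_1\otimes_Au_2$). A Hopf ideal: ideal $I$ with $\varepsilon(I)=0$, $\Delta(I)\subseteq$ image of $\mathcal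 H\otimes_AI+I\otimes_A\mathcal H$, $\mathcal S(I)\subseteq I$. $\langle s-t\rangle$ is the ideal generated by all $s(a)-t(a)$; $\overline{\mathcal H}=\mathcal H/\langle s-t\rangle$ with classes $\bar x$, an $A$-algebra via $\eta(a)=\overline{s(a)}=\overline{t(a)}$; $\bar I=I/\langle s-t\rangle$. The map $\delta$ above is a well-defined right $\mathcal H$-coaction making $\overline{\mathcal H}$ a right $\mathcal H$-comodule algebra; tensor products $-\otimes_A\mathcal H$ use the $A$-module structure via $\eta$ on the left factor and via $s$ on $\mathcal H$. $I$ is normal if $\langle s-t\rangle\subseteq I$ and for every $x\in I$, $\sum\overline{x_2}\otimes_A\mathcal S(x_1)x_3$ lies in the image of $\bar I\otimes_A\mathcal H$ in $\overline{\mathcal H}\otimes_A\mathcal H$. *)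

theory Defs
  imports Main
begin

definition is_ring_hom :: "('a::comm_ring_1 \<Rightarrow> 'b::comm_ring_1) \<Rightarrow> bool" where
  "is_ring_hom f \<longleftrightarrow> f 1 = 1 \<and> (\<forall>x y. f (x + y) = f x + f y) \<and> (\<forall>x y. f (x * y) = f x * f y)"

definition ring_ideal :: "'a::comm_ring_1 set \<Rightarrow> bool" where
  "ring_ideal I \<longleftrightarrow> 0 \<in> I \<and> (\<forall>x\<in>I. \<forall>y\<in>I. x + y \<in> I) \<and> (\<forall>r. \<forall>x\<in>I. r * x \<in> I)"

definition ideal_gen :: "'a::comm_ring_1 set \<Rightarrow> 'a set" where
  "ideal_gen X = \<Inter>{I. ring_ideal I \<and> X \<subseteq> I}"

definition st_ideal :: "('a \<Rightarrow> 'h::comm_ring_1) \<Rightarrow> ('a \<Rightarrow> 'h) \<Rightarrow> 'h set" where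
  "st_ideal s t = ideal_gen (range (\<lambda>a. s a - t a))"

text \<open>An element of a tensor product is represented by a finite list of simple tensors
  (their sum).  Two representatives denote the same element iff they are related by the
  smallest equivalence, compatible with concatenation and commutative, containing the
  given defining relations (a presentation of the tensor product as an abelian group).\<close>

inductive teq :: "('p list \<times> 'p list) set \<Rightarrow> 'p list \<Rightarrow> 'p list \<Rightarrow> bool" for G where
  gen: "(x, y) \<in> G \<Longrightarrow> teq G x y"
| refl: "teq G x x"
| sym: "teq G x y \<Longrightarrow> teq G y x"
| trans: "teq G x y \<Longrightarrow> teq G y z \<Longrightarrow> teq G x z"
| app: "teq G x y \<Longrightarrow> teq G u v \<Longrightarrow> teq G (x @ u) (y @ v)"
| comm: "teq G (x @ y) (y @ x)"

text \<open>Defining relations of M \<otimes>_A N, where M, N are A-modules given by representatives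
  (types 'm, 'n) modulo congruences eqM, eqN, with A acting on M by lM and on N by rN.\<close>
definition tensor_gens ::
  "('a \<Rightarrow> 'm::ab_group_add \<Rightarrow> 'm) \<Rightarrow> ('a \<Rightarrow> 'n::ab_group_add \<Rightarrow> 'n) \<Rightarrow>
   ('m \<Rightarrow> 'm \<Rightarrow> bool) \<Rightarrow> ('n \<Rightarrow> 'n \<Rightarrow> bool) \<Rightarrow> (('m \<times> 'n) list \<times> ('m \<times> 'n) list) set" where
  "tensor_gens lM rN eqM eqN =
     {([(m + m', n)], [(m, n), (m', n)]) | m m' n. True}
   \<union> {([(m, n + n')], [(m, n), (m, n')]) | m n n'. True}
   \<union> {([(lM a m, n)], [(m, rN a n)]) | a m n. True}
   \<union> {([(m, n), (- m, n)], []) | m n. True}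
   \<union> {([(m, n)], [(m', n)]) | m m' n. eqM m m'}
   \<union> {([(m, n)], [(m, n')]) | m n n'. eqN n n'}"

text \<open>Defining relations of the triple tensor product M \<otimes>_A N \<otimes>_A P
  (A acts on M by l1, on N by r2 (from the left tensor) and l2 (towards the right), on P by r3).\<close>
definition tensor3_gens ::
  "('a \<Rightarrow> 'm::ab_group_add \<Rightarrow> 'm) \<Rightarrow> ('a \<Rightarrow> 'n::ab_group_add \<Rightarrow> 'n) \<Rightarrow>
   ('a \<Rightarrow> 'n \<Rightarrow> 'n) \<Rightarrow> ('a \<Rightarrow> 'p::ab_group_add \<Rightarrow> 'p) \<Rightarrow>
   (('m \<times> 'n \<times> 'p) list \<times> ('m \<times> 'n \<times> 'p) list) set" where
  "tensor3_gens l1 r2 l2 r3 =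
     {([(m + m', n, p)], [(m, n, p), (m', n, p)]) | m m' n p. True}
   \<union> {([(m, n + n', p)], [(m, n, p), (m, n', p)]) | m n n' p. True}
   \<union> {([(m, n, p + p')], [(m, n, p), (m, n, p')]) | m n p p'. True}
   \<union> {([(l1 a m, n, p)], [(m, r2 a n, p)]) | a m n p. True}
   \<union> {([(m, l2 a n, p)], [(m, n, r3 a p)]) | a m n p. True}
   \<union> {([(m, n, p), (- m, n, p)], []) | m n p. True}"

text \<open>Equality in H \<otimes>_A H (left factor an A-module via t, right factor via s).\<close>
definition HH_eq :: "('a \<Rightarrow> 'h::comm_ring_1) \<Rightarrow> ('a \<Rightarrow> 'h) \<Rightarrow> ('h \<times> 'h) list \<Rightarrow> ('h \<times> 'h) list \<Rightarrow> bool" where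
  "HH_eq s t = teq (tensor_gens (\<lambda>a x. t a * x) (\<lambda>a y. s a * y) (=) (=))"

definition HHH_eq :: "('a \<Rightarrow> 'h::comm_ring_1) \<Rightarrow> ('a \<Rightarrow> 'h) \<Rightarrow>
    ('h \<times> 'h \<times> 'h) list \<Rightarrow> ('h \<times> 'h \<times> 'h) list \<Rightarrow> bool" where
  "HHH_eq s t = teq (tensor3_gens (\<lambda>a x. t a * x) (\<lambda>a y. s a * y) (\<lambda>a y. t a * y) (\<lambda>a z. s a * z))"

text \<open>Equality in (H/J) \<otimes>_A H for an ideal J, with H/J an A-module via s and H via s.
  With J = <s-t> this is H-bar \<otimes>_A H (eta(a) = class of s(a) = class of t(a)).\<close>
definition quot_H_eq :: "('a \<Rightarrow> 'h::comm_ring_1) \<Rightarrow> 'h set \<Rightarrow> ('h \<times> 'h) list \<Rightarrow> ('h \<times> 'h) list \<Rightarrow> bool" where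
  "quot_H_eq s J = teq (tensor_gens (\<lambda>a x. s a * x) (\<lambda>a y. s a * y) (\<lambda>x x'. x - x' \<in> J) (=))"

definition tmult :: "('h::comm_ring_1 \<times> 'h) list \<Rightarrow> ('h \<times> 'h) list \<Rightarrow> ('h \<times> 'h) list" where
  "tmult xs ys = concat (map (\<lambda>(x, y). map (\<lambda>(x', y'). (x * x', y * y')) ys) xs)"

definition Delta_left :: "('h \<Rightarrow> ('h \<times> 'h) list) \<Rightarrow> 'h \<Rightarrow> ('h \<times> 'h \<times> 'h) list" where
  "Delta_left Delta h = concat (map (\<lambda>(x, y). map (\<lambda>(x1, x2). (x1, x2, y)) (Delta x)) (Delta h))"

definition Delta_right :: "('h \<Rightarrow> ('h \<times> 'h) list) \<Rightarrow> 'h \<Rightarrow> ('h \<times> 'h \<times> 'h) list" where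
  "Delta_right Delta h = concat (map (\<lambda>(x, y). map (\<lambda>(y1, y2). (x, y1, y2)) (Delta y)) (Delta h))"

text \<open>iA : k \<rightarrow> A is the k-algebra structure of A; H is a k-algebra via s o iA = t o iA.
  Delta h is a representative (list of simple tensors) of Delta(h) \<in> H \<otimes>_A H.\<close>
definition comm_hopf_algebroid ::
  "('k::field \<Rightarrow> 'a::comm_ring_1) \<Rightarrow> ('a \<Rightarrow> 'h::comm_ring_1) \<Rightarrow> ('a \<Rightarrow> 'h) \<Rightarrow> ('h \<Rightarrow> 'a) \<Rightarrow>
   ('h \<Rightarrow> ('h \<times> 'h) list) \<Rightarrow> ('h \<Rightarrow> 'h) \<Rightarrow> bool" where
  "comm_hopf_algebroid iA s t \<epsilon> Delta S \<longleftrightarrow>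
     is_ring_hom iA \<and> is_ring_hom s \<and> is_ring_hom t \<and> is_ring_hom \<epsilon> \<and> is_ring_hom S \<and>
     (\<forall>c. s (iA c) = t (iA c)) \<and>
     \<comment> \<open>Delta is a k-algebra map H \<rightarrow> H \<otimes>_A H\<close>
     HH_eq s t (Delta 1) [(1, 1)] \<and>
     (\<forall>x y. HH_eq s t (Delta (x + y)) (Delta x @ Delta y)) \<and>
     (\<forall>x y. HH_eq s t (Delta (x * y)) (tmult (Delta x) (Delta y))) \<and>
     \<comment> \<open>A-coring: Delta and epsilon are A-bimodule maps (H: left via s, right via t)\<close>
     (\<forall>a h. HH_eq s t (Delta (s a * h)) (map (\<lambda>(x, y). (s a * x, y)) (Delta h))) \<and>
     (\<forall>a h. HH_eq s t (Delta (t a * h)) (map (\<lambda>(x, y). (x, t a * y)) (Delta h))) \<and>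
     (\<forall>a h. \<epsilon> (s a * h) = a * \<epsilon> h) \<and>
     (\<forall>a h. \<epsilon> (t a * h) = \<epsilon> h * a) \<and>
     \<comment> \<open>coassociativity\<close>
     (\<forall>h. HHH_eq s t (Delta_left Delta h) (Delta_right Delta h)) \<and>
     \<comment> \<open>counitality\<close>
     (\<forall>h. sum_list (map (\<lambda>(x, y). s (\<epsilon> x) * y) (Delta h)) = h) \<and>
     (\<forall>h. sum_list (map (\<lambda>(x, y). t (\<epsilon> y) * x) (Delta h)) = h) \<and>
     \<comment> \<open>antipode\<close>
     (\<forall>a. S (s a) = t a) \<and> (\<forall>a. S (t a) = s a) \<and> (\<forall>h. S (S h) = h) \<and>
     (\<forall>u. sum_list (map (\<lambda>(x, y). S x * y) (Delta u)) = t (\<epsilon> u)) \<and>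
     (\<forall>u. sum_list (map (\<lambda>(x, y). x * S y) (Delta u)) = s (\<epsilon> u))"

definition hopf_ideal ::
  "('a::comm_ring_1 \<Rightarrow> 'h::comm_ring_1) \<Rightarrow> ('a \<Rightarrow> 'h) \<Rightarrow> ('h \<Rightarrow> 'a) \<Rightarrow>
   ('h \<Rightarrow> ('h \<times> 'h) list) \<Rightarrow> ('h \<Rightarrow> 'h) \<Rightarrow> 'h set \<Rightarrow> bool" where
  "hopf_ideal s t \<epsilon> Delta S I \<longleftrightarrow>
     ring_ideal I \<and> (\<forall>x\<in>I. \<epsilon> x = 0) \<and>
     (\<forall>x\<in>I. \<exists>zs. HH_eq s t (Delta x) zs \<and> (\<forall>(u, v)\<in>set zs. u \<in> I \<or> v \<in> I)) \<and>
     (\<forall>x\<in>I. S x \<in> I)"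

definition hbar_coaction :: "('h \<Rightarrow> ('h \<times> 'h) list) \<Rightarrow> ('h::comm_ring_1 \<Rightarrow> 'h) \<Rightarrow> 'h \<Rightarrow> ('h \<times> 'h) list" where
  "hbar_coaction Delta S h = map (\<lambda>(h1, h2, h3). (h2, S h1 * h3)) (Delta_left Delta h)"

definition normal_ideal ::
  "('a::comm_ring_1 \<Rightarrow> 'h::comm_ring_1) \<Rightarrow> ('a \<Rightarrow> 'h) \<Rightarrow>
   ('h \<Rightarrow> ('h \<times> 'h) list) \<Rightarrow> ('h \<Rightarrow> 'h) \<Rightarrow> 'h set \<Rightarrow> bool" where
  "normal_ideal s t Delta S I \<longleftrightarrow>
     st_ideal s t \<subseteq> I \<and>
     (\<forall>x\<in>I. \<exists>zs. set zs \<subseteq> I \<times> UNIV \<and>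
        quot_H_eq s (st_ideal s t) (hbar_coaction Delta S x) zs)"

end

theory Submission
  imports Defs
begin

lemma teq_mono: "teq G x y \<Longrightarrow> G \<subseteq> G' \<Longrightarrow> teq G' x y"
  by (induction rule: teq.induct) (auto intro: teq.intros)

lemma teq_hom:
  assumes "teq G x y" "\<And>a b. F (a @ b) = F a @ F b"
    "\<And>a b. (a, b) \<in> G \<Longrightarrow> teq G' (F a) (F b)"
  shows "teq G' (F x) (F y)"
  using assms(1)
proof (induction rule: teq.induct)
  case (gen x y) then show ?case using assms(3) by blast
next
  case (refl x) then show ?case by (rule teq.refl)
next
  case (sym x y) show ?case by (rule teq.sym[OF sym.IH])
next
  case (trans x y z) show ?case by (rule teq.trans[OF trans.IH])
next
  case (app x y u v) then show ?case by (simp add: assms(2) teq.app)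
next
  case (comm x y) then show ?case by (simp add: assms(2) teq.comm)
qed

definition negl :: "('m::ab_group_add \<times> 'n) list \<Rightarrow> ('m \<times> 'n) list" where
  "negl xs = map (\<lambda>(m, n). (- m, n)) xs"

lemma teq_inv:
  fixes G :: "(('m::ab_group_add \<times> 'n) list \<times> ('m \<times> 'n) list) set"
  assumes "\<And>m n. ([(m, n), (- m, n)], []) \<in> G"
  shows "teq G (xs @ negl xs) []"
proof (induction xs)
  case Nil then show ?case by (simp add: negl_def teq.refl)
next
  case (Cons p xs)
  obtain m n where p: "p = (m, n)" by fastforce
  have 1: "teq G ([p] @ (xs @ [(-m,n)]) @ negl xs) ([p] @ ([(-m,n)] @ xs) @ negl xs)"
    by (intro teq.app teq.refl teq.comm)
  have 2: "teq G ([p, (-m,n)] @ (xs @ negl xs)) ([] @ [])"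
    by (rule teq.app[OF teq.gen Cons.IH]) (simp add: p assms)
  have "teq G ([p] @ (xs @ [(-m,n)]) @ negl xs) ([] @ [])"
    using teq.trans[OF 1] 2 by simp
  then show ?case using p by (simp add: negl_def)
qed

lemma teq_cancel:
  fixes G :: "(('m::ab_group_add \<times> 'n) list \<times> ('m \<times> 'n) list) set"
  assumes "\<And>m n. ([(m, n), (- m, n)], []) \<in> G" "teq G (a @ c) (b @ c)"
  shows "teq G a b"
proof -
  have i: "teq G (c @ negl c) []" by (rule teq_inv[OF assms(1)])
  have "teq G (a @ (c @ negl c)) (a @ [])" by (intro teq.app teq.refl i)
  then have 1: "teq G a ((a @ c) @ negl c)" by (simp add: teq.sym)
  have 2: "teq G ((a @ c) @ negl c) ((b @ c) @ negl c)" by (intro teq.app teq.refl assms(2))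
  have "teq G (b @ (c @ negl c)) (b @ [])" by (intro teq.app teq.refl i)
  then have 3: "teq G ((b @ c) @ negl c) b" by simp
  show ?thesis using teq.trans[OF 1 teq.trans[OF 2 3]] .
qed

lemma tg_add1: "([(m + m', n)], [(m, n), (m', n)]) \<in> tensor_gens lM rN eqM eqN"
  unfolding tensor_gens_def by blast
lemma tg_add2: "([(m, n + n')], [(m, n), (m, n')]) \<in> tensor_gens lM rN eqM eqN"
  unfolding tensor_gens_def by blast
lemma tg_mod: "([(lM a m, n)], [(m, rN a n)]) \<in> tensor_gens lM rN eqM eqN"
  unfolding tensor_gens_def by blast
lemma tg_neg: "([(m, n), (- m, n)], []) \<in> tensor_gens lM rN eqM eqN"
  unfolding tensor_gens_def by blast
lemma tg_eqM: "eqM m m' \<Longrightarrow> ([(m, n)], [(m', n)]) \<in> tensor_gens lM rN eqM eqN"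
  unfolding tensor_gens_def by blast

lemma tg_cancel: "teq (tensor_gens lM rN eqM eqN) (a @ c) (b @ c) \<Longrightarrow> teq (tensor_gens lM rN eqM eqN) a b"
  by (rule teq_cancel[OF tg_neg])

lemma tg_zero2: "teq (tensor_gens lM rN eqM eqN) [(m, 0)] []"
proof -
  have "teq (tensor_gens lM rN eqM eqN) [(m, 0 + 0)] [(m, 0), (m, 0)]" by (intro teq.gen tg_add2)
  then have "teq (tensor_gens lM rN eqM eqN) ([(m, 0)] @ [(m, 0)]) ([] @ [(m, 0)])"
    by (simp add: teq.sym)
  then show ?thesis by (rule tg_cancel)
qed

lemma tg_zero1: "teq (tensor_gens lM rN eqM eqN) [(0, n)] []"
proof -
  have "teq (tensor_gens lM rN eqM eqN) [(0 + 0, n)] [(0, n), (0, n)]" by (intro teq.gen tg_add1)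
  then have "teq (tensor_gens lM rN eqM eqN) ([(0, n)] @ [(0, n)]) ([] @ [(0, n)])"
    by (simp add: teq.sym)
  then show ?thesis by (rule tg_cancel)
qed

lemma tg_neg2: "teq (tensor_gens lM rN eqM eqN) [(m, n), (m, - n)] []"
proof -
  have "teq (tensor_gens lM rN eqM eqN) [(m, n + - n)] [(m, n), (m, - n)]" by (intro teq.gen tg_add2)
  then show ?thesis using tg_zero2 by (metis teq.sym teq.trans add.right_inverse)
qed

lemma teq_pointwise:
  assumes "\<And>e. e \<in> set L \<Longrightarrow> teq G [f e] [h e]"
  shows "teq G (map f L) (map h L)"
  using assms
proof (induction L)
  case Nil then show ?case by (simp add: teq.refl)
next
  case (Cons a L)
  have "teq G ([f a] @ map f L) ([h a] @ map h L)" using Cons by (intro teq.app) auto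
  then show ?case by simp
qed

lemma ring_hom_0: "is_ring_hom f \<Longrightarrow> f 0 = 0"
  unfolding is_ring_hom_def by (metis add_cancel_right_right add_0)
lemma ring_hom_neg: "is_ring_hom f \<Longrightarrow> f (- x) = - f x"
  using ring_hom_0[of f] unfolding is_ring_hom_def
  by (metis add.right_inverse add_eq_0_iff2)

lemma ideal_mult: "ring_ideal I \<Longrightarrow> x \<in> I \<Longrightarrow> r * x \<in> I"
  unfolding ring_ideal_def by blast
lemma ideal_neg: "ring_ideal I \<Longrightarrow> x \<in> I \<Longrightarrow> - x \<in> I"
  using ideal_mult[of I x "-1"] by simp

lemma st_mem: "t a * x - s a * x \<in> st_ideal s t"
  unfolding st_ideal_def ideal_gen_def
proof (clarify)
  fix I assume "ring_ideal I" "range (\<lambda>a. s a - t a) \<subseteq> I"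
  then have "(- x) * (s a - t a) \<in> I" by (intro ideal_mult) auto
  then show "t a * x - s a * x \<in> I" by (simp add: algebra_simps)
qed

lemma tg_cases:
  assumes "(x, y) \<in> tensor_gens lM rN eqM eqN"
    "\<And>m m' n. P [(m + m', n)] [(m, n), (m', n)]"
    "\<And>m n n'. P [(m, n + n')] [(m, n), (m, n')]"
    "\<And>a m n. P [(lM a m, n)] [(m, rN a n)]"
    "\<And>m n. P [(m, n), (- m, n)] []"
    "\<And>m m' n. eqM m m' \<Longrightarrow> P [(m, n)] [(m', n)]"
    "\<And>m n n'. eqN n n' \<Longrightarrow> P [(m, n)] [(m, n')]"
  shows "P x y"
  using assms(1) unfolding tensor_gens_def by (auto intro: assms(2-7))

definition gmap :: "('h::comm_ring_1 \<Rightarrow> 'h) \<Rightarrow> 'h \<Rightarrow> ('h \<times> 'h) list \<Rightarrow> ('h \<times> 'h) list" where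
  "gmap S y L = map (\<lambda>(x1, x2). (x2, S x1 * y)) L"

definition Phi :: "('h \<Rightarrow> ('h \<times> 'h) list) \<Rightarrow> ('h::comm_ring_1 \<Rightarrow> 'h) \<Rightarrow> ('h \<times> 'h) list \<Rightarrow> ('h \<times> 'h) list" where
  "Phi Delta S L = concat (map (\<lambda>(x, y). gmap S y (Delta x)) L)"

lemma hbar_Phi: "hbar_coaction Delta S h = Phi Delta S (Delta h)"
  unfolding hbar_coaction_def Phi_def Delta_left_def gmap_def
  by (simp add: map_concat comp_def split_def)

lemma lemB:
  assumes S: "is_ring_hom S" and St: "\<And>a. S (t a) = s a" and h: "HH_eq s t a b"
  shows "quot_H_eq s J (gmap S y a) (gmap S y b)"
  unfolding quot_H_eq_def
proof (rule teq_hom[where F="gmap S y", OF h[unfolded HH_eq_def]])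
  show "\<And>a b. gmap S y (a @ b) = gmap S y a @ gmap S y b" by (simp add: gmap_def)
next
  fix a b
  assume "(a, b) \<in> tensor_gens (\<lambda>a x. t a * x) (\<lambda>a y. s a * y) (=) (=)"
  then show "teq (tensor_gens (\<lambda>a x. s a * x) (\<lambda>a y. s a * y) (\<lambda>x x'. x - x' \<in> J) (=)) (gmap S y a) (gmap S y b)"
  proof (rule tg_cases)
    fix m m' n
    have "S (m + m') * y = S m * y + S m' * y" using S by (simp add: is_ring_hom_def distrib_right)
    then show "teq (tensor_gens (\<lambda>a x. s a * x) (\<lambda>a y. s a * y) (\<lambda>x x'. x - x' \<in> J) (=))
      (gmap S y [(m + m', n)]) (gmap S y [(m, n), (m', n)])"
      by (simp add: gmap_def teq.gen tg_add2)
  next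
    fix m n n'
    show "teq (tensor_gens (\<lambda>a x. s a * x) (\<lambda>a y. s a * y) (\<lambda>x x'. x - x' \<in> J) (=))
      (gmap S y [(m, n + n')]) (gmap S y [(m, n), (m, n')])"
      by (simp add: gmap_def teq.gen tg_add1)
  next
    fix a m n
    have "S (t a * m) * y = s a * (S m * y)" using S St by (simp add: is_ring_hom_def)
    moreover have "([(s a * n, S m * y)], [(n, s a * (S m * y))]) \<in> tensor_gens (\<lambda>a x. s a * x) (\<lambda>a y. s a * y) (\<lambda>x x'. x - x' \<in> J) (=)"
      unfolding tensor_gens_def by blast
    ultimately show "teq (tensor_gens (\<lambda>a x. s a * x) (\<lambda>a y. s a * y) (\<lambda>x x'. x - x' \<in> J) (=))
      (gmap S y [(t a * m, n)]) (gmap S y [(m, s a * n)])"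
      by (simp add: gmap_def teq.sym teq.gen)
  next
    fix m n
    have "S (- m) * y = - (S m * y)" using ring_hom_neg[OF S] by simp
    then show "teq (tensor_gens (\<lambda>a x. s a * x) (\<lambda>a y. s a * y) (\<lambda>x x'. x - x' \<in> J) (=))
      (gmap S y [(m, n), (- m, n)]) (gmap S y [])"
      by (simp add: gmap_def tg_neg2)
  qed (simp_all add: teq.refl)
qed

lemma lemL2:
  "quot_H_eq s J (gmap S (n + n') L) (gmap S n L @ gmap S n' L)"
  unfolding quot_H_eq_def
proof (induction L)
  case Nil then show ?case by (simp add: gmap_def teq.refl)
next
  case (Cons e L)
  obtain x1 x2 where e: "e = (x1, x2)" by fastforce
  let ?G = "tensor_gens (\<lambda>a x. s a * x) (\<lambda>a y. s a * y) (\<lambda>x x'. x - x' \<in> J) (=)"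
  let ?p = "(x2, S x1 * n)" and ?q = "(x2, S x1 * n')"
  have 1: "teq ?G ([(x2, S x1 * (n + n'))] @ gmap S (n + n') L) ([?p, ?q] @ (gmap S n L @ gmap S n' L))"
    by (rule teq.app[OF teq.gen Cons.IH]) (simp add: distrib_left tg_add2)
  have 2: "teq ?G ([?p] @ ([?q] @ gmap S n L) @ gmap S n' L) ([?p] @ (gmap S n L @ [?q]) @ gmap S n' L)"
    by (intro teq.app teq.refl teq.comm)
  show ?case using teq.trans[OF 1] 2 e by (simp add: gmap_def)
qed

lemma Delta0:
  fixes Delta :: "'h::comm_ring_1 \<Rightarrow> ('h \<times> 'h) list"
  assumes "\<And>x y. HH_eq s t (Delta (x + y)) (Delta x @ Delta y)"
  shows "HH_eq s t (Delta 0) []"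
proof -
  have "HH_eq s t (Delta 0) (Delta 0 @ Delta 0)" using assms[of 0 0] by simp
  then have "HH_eq s t (Delta 0 @ Delta 0) ([] @ Delta 0)" by (simp add: HH_eq_def teq.sym)
  then show ?thesis unfolding HH_eq_def by (rule tg_cancel)
qed


lemma gmap_append[simp]: "gmap S y (a @ b) = gmap S y a @ gmap S y b"
  by (simp add: gmap_def)
lemma gmap_Nil[simp]: "gmap S y [] = []"
  by (simp add: gmap_def)
lemma Phi_append: "Phi Delta S (a @ b) = Phi Delta S a @ Phi Delta S b"
  by (simp add: Phi_def)

lemma lemC:
  assumes H: "comm_hopf_algebroid iA s t \<epsilon> Delta S" and h: "HH_eq s t a b"
  shows "quot_H_eq s (st_ideal s t) (Phi Delta S a) (Phi Delta S b)"
proof -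
  have S: "is_ring_hom S" and St: "\<And>a. S (t a) = s a"
    and Dadd: "\<And>x y. HH_eq s t (Delta (x + y)) (Delta x @ Delta y)"
    and Dt: "\<And>a h. HH_eq s t (Delta (t a * h)) (map (\<lambda>(x, y). (x, t a * y)) (Delta h))"
    using H unfolding comm_hopf_algebroid_def by blast+
  define J where "J = st_ideal s t"
  let ?G = "tensor_gens (\<lambda>a x. s a * x) (\<lambda>a y. s a * y) (\<lambda>x x'. x - x' \<in> J) (=)"
  have "teq ?G (Phi Delta S a) (Phi Delta S b)"
  proof (rule teq_hom[where F="Phi Delta S", OF h[unfolded HH_eq_def]])
    show "\<And>a b. Phi Delta S (a @ b) = Phi Delta S a @ Phi Delta S b" by (rule Phi_append)
  next
    fix a b
    assume "(a, b) \<in> tensor_gens (\<lambda>a x. t a * x) (\<lambda>a y. s a * y) (=) (=)"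
    then show "teq ?G (Phi Delta S a) (Phi Delta S b)"
    proof (rule tg_cases)
      fix m m' n
      show "teq ?G (Phi Delta S [(m + m', n)]) (Phi Delta S [(m, n), (m', n)])"
        using lemB[OF S St Dadd[of m m'], of J n] by (simp add: Phi_def quot_H_eq_def)
    next
      fix m n n'
      show "teq ?G (Phi Delta S [(m, n + n')]) (Phi Delta S [(m, n), (m, n')])"
        using lemL2[of s J S n n' "Delta m"] by (simp add: Phi_def quot_H_eq_def)
    next
      fix a m n
      have 1: "teq ?G (gmap S n (Delta (t a * m))) (gmap S n (map (\<lambda>(x, y). (x, t a * y)) (Delta m)))"
        using lemB[OF S St Dt[of a m], of J n] by (simp add: quot_H_eq_def)
      have 2: "teq ?G (map (\<lambda>(x1, x2). (t a * x2, S x1 * n)) (Delta m))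
                      (map (\<lambda>(x1, x2). (x2, S x1 * (s a * n))) (Delta m))"
      proof (rule teq_pointwise)
        fix e assume "e \<in> set (Delta m)"
        obtain x1 x2 where e: "e = (x1, x2)" by fastforce
        have a1: "teq ?G [(t a * x2, S x1 * n)] [(s a * x2, S x1 * n)]"
          by (rule teq.gen, rule tg_eqM) (simp add: J_def st_mem)
        have "([(s a * x2, S x1 * n)], [(x2, s a * (S x1 * n))]) \<in> ?G"
          unfolding tensor_gens_def by blast
        then have a2: "teq ?G [(s a * x2, S x1 * n)] [(x2, S x1 * (s a * n))]"
          by (simp add: teq.gen mult.left_commute)
        show "teq ?G [(\<lambda>(x1, x2). (t a * x2, S x1 * n)) e] [(\<lambda>(x1, x2). (x2, S x1 * (s a * n))) e]"
          using teq.trans[OF a1 a2] e by simp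
      qed
      have e1: "gmap S n (map (\<lambda>(x, y). (x, t a * y)) (Delta m)) = map (\<lambda>(x1, x2). (t a * x2, S x1 * n)) (Delta m)"
        by (simp add: gmap_def comp_def split_def)
      have e2: "gmap S (s a * n) (Delta m) = map (\<lambda>(x1, x2). (x2, S x1 * (s a * n))) (Delta m)"
        by (simp add: gmap_def)
      show "teq ?G (Phi Delta S [(t a * m, n)]) (Phi Delta S [(m, s a * n)])"
        using teq.trans[OF 1[unfolded e1] 2] e2 by (simp add: Phi_def)
    next
      fix m n
      have "HH_eq s t (Delta (m + - m)) (Delta m @ Delta (- m))" by (rule Dadd)
      then have "HH_eq s t (Delta 0) (Delta m @ Delta (- m))" by simp
      then have hm: "HH_eq s t (Delta m @ Delta (- m)) []"
        using Delta0[OF Dadd] unfolding HH_eq_def by (rule teq.trans[OF teq.sym])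
      have "teq ?G (gmap S n (Delta m @ Delta (- m))) (gmap S n [])"
        using lemB[OF S St hm, where J=J and y=n] by (simp add: quot_H_eq_def)
      then show "teq ?G (Phi Delta S [(m, n), (- m, n)]) (Phi Delta S [])"
        by (simp add: Phi_def)
    qed (simp_all add: teq.refl)
  qed
  then show ?thesis by (simp add: J_def quot_H_eq_def)
qed

lemma right_exact:
  assumes JI: "J \<subseteq> I" and negI: "\<And>m. m \<in> I \<Longrightarrow> - m \<in> I"
    and h: "teq (tensor_gens lM rN (\<lambda>x x'. x - x' \<in> I) (=)) xs ys"
  shows "\<exists>zs. set zs \<subseteq> I \<times> UNIV \<and> teq (tensor_gens lM rN (\<lambda>x x'. x - x' \<in> J) (=)) xs (ys @ zs)"
  using h
proof (induction rule: teq.induct)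
  case (gen x y)
  let ?G = "tensor_gens lM rN (\<lambda>x x'. x - x' \<in> J) (=)"
  from gen show ?case
  proof (rule tg_cases)
    fix m m' n
    assume "m - m' \<in> I"
    moreover have "teq ?G [(m' + (m - m'), n)] [(m', n), (m - m', n)]" by (intro teq.gen tg_add1)
    ultimately show "\<exists>zs. set zs \<subseteq> I \<times> UNIV \<and> teq ?G [(m, n)] ([(m', n)] @ zs)"
      by (intro exI[of _ "[(m - m', n)]"]) simp
  next
    fix m m' n show "\<exists>zs. set zs \<subseteq> I \<times> UNIV \<and> teq ?G [(m + m', n)] ([(m, n), (m', n)] @ zs)"
      by (rule exI[of _ "[]"]) (simp add: teq.gen tg_add1)
  next
    fix m n n' show "\<exists>zs. set zs \<subseteq> I \<times> UNIV \<and> teq ?G [(m, n + n')] ([(m, n), (m, n')] @ zs)"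
      by (rule exI[of _ "[]"]) (simp add: teq.gen tg_add2)
  next
    fix a m n show "\<exists>zs. set zs \<subseteq> I \<times> UNIV \<and> teq ?G [(lM a m, n)] ([(m, rN a n)] @ zs)"
      by (rule exI[of _ "[]"]) (simp add: teq.gen tg_mod)
  next
    fix m n show "\<exists>zs. set zs \<subseteq> I \<times> UNIV \<and> teq ?G [(m, n), (- m, n)] ([] @ zs)"
      by (rule exI[of _ "[]"]) (simp add: teq.gen tg_neg)
  qed (intro exI[of _ "[]"], simp add: teq.refl)
next
  case (refl x) then show ?case by (intro exI[of _ "[]"]) (simp add: teq.refl)
next
  case (sym x y)
  then obtain zs where zs: "set zs \<subseteq> I \<times> UNIV" "teq (tensor_gens lM rN (\<lambda>x x'. x - x' \<in> J) (=)) x (y @ zs)"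
    by blast
  let ?G = "tensor_gens lM rN (\<lambda>x x'. x - x' \<in> J) (=)"
  have "teq ?G (y @ (zs @ negl zs)) (y @ [])" by (intro teq.app teq.refl teq_inv tg_neg)
  then have 1: "teq ?G y ((y @ zs) @ negl zs)" by (simp add: teq.sym)
  have 2: "teq ?G ((y @ zs) @ negl zs) (x @ negl zs)" by (rule teq.app[OF teq.sym[OF zs(2)] teq.refl])
  have "set (negl zs) \<subseteq> I \<times> UNIV" using zs(1) negI by (auto simp: negl_def)
  then show ?case using teq.trans[OF 1 2] by blast
next
  case (trans x y z)
  then obtain z1 z2 where z: "set z1 \<subseteq> I \<times> UNIV" "teq (tensor_gens lM rN (\<lambda>x x'. x - x' \<in> J) (=)) x (y @ z1)"
    "set z2 \<subseteq> I \<times> UNIV" "teq (tensor_gens lM rN (\<lambda>x x'. x - x' \<in> J) (=)) y (z @ z2)" by blast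
  moreover have "teq (tensor_gens lM rN (\<lambda>x x'. x - x' \<in> J) (=)) x ((z @ z2) @ z1)"
    by (rule teq.trans[OF z(2) teq.app[OF z(4) teq.refl]])
  ultimately show ?case by (intro exI[of _ "z2 @ z1"]) auto
next
  case (app x y u v)
  let ?G = "tensor_gens lM rN (\<lambda>x x'. x - x' \<in> J) (=)"
  from app obtain z1 z2 where z: "set z1 \<subseteq> I \<times> UNIV" "teq ?G x (y @ z1)"
    "set z2 \<subseteq> I \<times> UNIV" "teq ?G u (v @ z2)" by blast
  have 1: "teq ?G (x @ u) ((y @ z1) @ (v @ z2))" by (intro teq.app z)
  have 2: "teq ?G (y @ (z1 @ v) @ z2) (y @ (v @ z1) @ z2)" by (intro teq.app teq.refl teq.comm)
  have "teq ?G (x @ u) ((y @ v) @ (z1 @ z2))" using teq.trans[OF 1] 2 by simp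
  then show ?case using z by (intro exI[of _ "z1 @ z2"]) auto
next
  case (comm x y) then show ?case by (intro exI[of _ "[]"]) (simp add: teq.comm)
qed


lemma zeros_I:
  assumes "set zs \<subseteq> I \<times> UNIV"
  shows "quot_H_eq s I zs []"
  using assms unfolding quot_H_eq_def
proof (induction zs)
  case Nil then show ?case by (simp add: teq.refl)
next
  case (Cons p zs)
  obtain m n where p: "p = (m, n)" by fastforce
  let ?G = "tensor_gens (\<lambda>a x. s a * x) (\<lambda>a y. s a * y) (\<lambda>x x'. x - x' \<in> I) (=)"
  have "m \<in> I" using Cons.prems p by auto
  then have "teq ?G [(m, n)] [(0, n)]" by (intro teq.gen tg_eqM) simp
  then have "teq ?G [(m, n)] []" using tg_zero1 by (rule teq.trans)
  moreover have "teq ?G zs []" using Cons.IH Cons.prems by simp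
  ultimately have "teq ?G ([(m, n)] @ zs) ([] @ [])" by (rule teq.app)
  then show ?case using p by simp
qed

lemma quot_mono:
  assumes "J \<subseteq> I" "quot_H_eq s J x y"
  shows "quot_H_eq s I x y"
proof -
  have "tensor_gens (\<lambda>a x. s a * x) (\<lambda>a y. s a * y) (\<lambda>x x'. x - x' \<in> J) (=)
     \<subseteq> tensor_gens (\<lambda>a x. s a * x) (\<lambda>a y. s a * y) (\<lambda>x x'. x - x' \<in> I) (=)"
    using assms(1) unfolding tensor_gens_def by blast
  then show ?thesis using teq_mono[OF assms(2)[unfolded quot_H_eq_def]] unfolding quot_H_eq_def by blast
qed

theorem proposition3p18:
  fixes iA :: "'k::field \<Rightarrow> 'a::comm_ring_1"
    and s t :: "'a \<Rightarrow> 'h::comm_ring_1"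
    and \<epsilon> :: "'h \<Rightarrow> 'a"
    and Delta :: "'h \<Rightarrow> ('h \<times> 'h) list"
    and S :: "'h \<Rightarrow> 'h"
    and I :: "'h set"
  assumes "comm_hopf_algebroid iA s t \<epsilon> Delta S"
    and "hopf_ideal s t \<epsilon> Delta S I"
  shows "normal_ideal s t Delta S I \<longleftrightarrow>
    (st_ideal s t \<subseteq> I \<and>
     (\<exists>\<delta>' :: 'h \<Rightarrow> ('h \<times> 'h) list.
        (\<forall>x y. x - y \<in> I \<longrightarrow> quot_H_eq s I (\<delta>' x) (\<delta>' y)) \<and>
        (\<forall>x. quot_H_eq s I (\<delta>' x) (hbar_coaction Delta S x))))"
proof -
  note H = assms(1)
  have RI: "ring_ideal I" using assms(2) unfolding hopf_ideal_def by blast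
  have negI: "\<And>m. m \<in> I \<Longrightarrow> - m \<in> I" using ideal_neg[OF RI] .
  have Dadd: "\<And>x y. HH_eq s t (Delta (x + y)) (Delta x @ Delta y)"
    using H unfolding comm_hopf_algebroid_def by blast
  have hadd: "quot_H_eq s (st_ideal s t) (hbar_coaction Delta S (x + y))
      (hbar_coaction Delta S x @ hbar_coaction Delta S y)" for x y
    using lemC[OF H Dadd[of x y]] by (simp add: hbar_Phi Phi_append)
  have h0: "quot_H_eq s (st_ideal s t) (hbar_coaction Delta S 0) []"
    using lemC[OF H Delta0[OF Dadd]] by (simp add: hbar_Phi Phi_def)
  show ?thesis
  proof
    assume N: "normal_ideal s t Delta S I"
    then have st: "st_ideal s t \<subseteq> I" unfolding normal_ideal_def by blast
    have "quot_H_eq s I (hbar_coaction Delta S x) (hbar_coaction Delta S y)" if xy: "x - y \<in> I" for x y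
    proof -
      obtain zs where zs: "set zs \<subseteq> I \<times> UNIV"
        "quot_H_eq s (st_ideal s t) (hbar_coaction Delta S (x - y)) zs"
        using N xy unfolding normal_ideal_def by blast
      have 1: "quot_H_eq s I (hbar_coaction Delta S x) (hbar_coaction Delta S y @ hbar_coaction Delta S (x - y))"
        using quot_mono[OF st hadd[of y "x - y"]] by simp
      have 2: "quot_H_eq s I (hbar_coaction Delta S (x - y)) []"
        using teq.trans[OF quot_mono[OF st zs(2), unfolded quot_H_eq_def] zeros_I[OF zs(1), unfolded quot_H_eq_def]]
        unfolding quot_H_eq_def .
      have 3: "quot_H_eq s I (hbar_coaction Delta S y @ hbar_coaction Delta S (x - y)) (hbar_coaction Delta S y @ [])"
        using 2 unfolding quot_H_eq_def by (intro teq.app teq.refl)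
      show ?thesis using teq.trans[OF 1[unfolded quot_H_eq_def] 3[unfolded quot_H_eq_def]] unfolding quot_H_eq_def by simp
    qed
    then show "st_ideal s t \<subseteq> I \<and>
     (\<exists>\<delta>' :: 'h \<Rightarrow> ('h \<times> 'h) list.
        (\<forall>x y. x - y \<in> I \<longrightarrow> quot_H_eq s I (\<delta>' x) (\<delta>' y)) \<and>
        (\<forall>x. quot_H_eq s I (\<delta>' x) (hbar_coaction Delta S x)))"
      using st by (intro conjI exI[of _ "hbar_coaction Delta S"]) (auto simp: quot_H_eq_def teq.refl)
  next
    assume R: "st_ideal s t \<subseteq> I \<and>
     (\<exists>\<delta>' :: 'h \<Rightarrow> ('h \<times> 'h) list.
        (\<forall>x y. x - y \<in> I \<longrightarrow> quot_H_eq s I (\<delta>' x) (\<delta>' y)) \<and>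
        (\<forall>x. quot_H_eq s I (\<delta>' x) (hbar_coaction Delta S x)))"
    then have st: "st_ideal s t \<subseteq> I" by blast
    from R obtain d where d1: "\<And>x y. x - y \<in> I \<Longrightarrow> quot_H_eq s I (d x) (d y)"
      and d2: "\<And>x. quot_H_eq s I (d x) (hbar_coaction Delta S x)" by blast
    have "\<exists>zs. set zs \<subseteq> I \<times> UNIV \<and> quot_H_eq s (st_ideal s t) (hbar_coaction Delta S x) zs"
      if x: "x \<in> I" for x
    proof -
      have a: "quot_H_eq s I (d x) (d 0)" using d1 x by simp
      have b: "quot_H_eq s I (hbar_coaction Delta S 0) []" using quot_mono[OF st h0] .
      have "quot_H_eq s I (hbar_coaction Delta S x) []"
        using teq.trans[OF teq.sym[OF d2[of x, unfolded quot_H_eq_def]]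
                teq.trans[OF a[unfolded quot_H_eq_def] teq.trans[OF d2[of 0, unfolded quot_H_eq_def] b[unfolded quot_H_eq_def]]]]
        unfolding quot_H_eq_def .
      from right_exact[OF st negI this[unfolded quot_H_eq_def]]
      show ?thesis unfolding quot_H_eq_def by simp
    qed
    then show "normal_ideal s t Delta S I" using st unfolding normal_ideal_def by blast
  qed
qed

end
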